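(* Under the standing assumptions in the context, let $k\ge2$ be a fixed integer and let $v_1,\dots,v_k$ be distinct vertices of $S_{\mathrm{small}}$. Then $$\Pr\bigl(v_1v_2\in E(G)\ \big|\ d_S(v_1)=i_1,\dots,d_S(v_k)=i_k\bigr)=O\!\left(\frac{J^2M}{d(S)^2}\right)$$ for all integers $i_j\le d(v_j)$ ($j\le k$) for which the conditioning event has positive probability, and $\Pr(v_1v_2\in E(G))=O\!\left(\frac{J^2M}{d(S)^2}\right)$.
   Context: All asymptotics are as $n\to\infty$. For each $n$, $\mathbf d=(d(1),\dots,d(n))$ is a sequence of integers with $1\le d(1)\le\dots\le d(n)$ and even sum; $M=\sum_i d(i)$, $\Delta=d(n)$, $d(A)=\sum_{i\in A}d(i)$. $G$ is a uniformly random simple graph on $[n]$ with degree sequence $\mathbf d$. $S\subseteq[n]$ is a given set, $\gamma=d(S)/M$, $d_S(v)$ is the degree of $v$ in $G[S]$. Standing assumptions: there is $\delta=\delta(n)\to0$ with $\delta^{-1}=O(\log\log M)$ and $\Delta^2(\gamma^{-1}\log M)^{12}\le\delta\,d(S)$, and a constant $c>0$ with $\gamma<1-c$. Define $C=\delta^{-1/16}\gamma^{-1}\log M$, $J=\min\{C,\Delta\}$ and $S_{\mathrm{small}}=\{v\in S: d(v)\le C\}$. *)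

theory Defs
  imports Complex_Main "HOL-Library.Landau_Symbols"
begin

text \<open>Vertex set is [n] = {1..n}. A simple graph on [n] is a set of edges, each edge
  a two-element subset of [n].\<close>

definition all_edges :: "nat \<Rightarrow> nat set set" where
  "all_edges n = {e. \<exists>u v. u \<in> {1..n} \<and> v \<in> {1..n} \<and> u \<noteq> v \<and> e = {u, v}}"

definition deg :: "nat set set \<Rightarrow> nat \<Rightarrow> nat" where
  "deg E v = card {e \<in> E. v \<in> e}"

definition degS :: "nat set set \<Rightarrow> nat set \<Rightarrow> nat \<Rightarrow> nat" where
  "degS E S v = card {e \<in> E. v \<in> e \<and> e \<subseteq> S}"

definition graphs_deg :: "nat \<Rightarrow> (nat \<Rightarrow> nat) \<Rightarrow> nat set set set" where
  "graphs_deg n d = {E. E \<subseteq> all_edges n \<and> (\<forall>v\<in>{1..n}. deg E v = d v)}"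

definition uprob :: "'a set \<Rightarrow> ('a \<Rightarrow> bool) \<Rightarrow> real" where
  "uprob Gs P = real (card {G \<in> Gs. P G}) / real (card Gs)"

definition ucondprob :: "'a set \<Rightarrow> ('a \<Rightarrow> bool) \<Rightarrow> ('a \<Rightarrow> bool) \<Rightarrow> real" where
  "ucondprob Gs A B = real (card {G \<in> Gs. A G \<and> B G}) / real (card {G \<in> Gs. B G})"

definition Msum :: "(nat \<Rightarrow> nat) \<Rightarrow> nat \<Rightarrow> nat" where
  "Msum d n = (\<Sum>i=1..n. d i)"

definition dset :: "(nat \<Rightarrow> nat) \<Rightarrow> nat set \<Rightarrow> nat" where
  "dset d A = (\<Sum>i\<in>A. d i)"

definition gam :: "(nat \<Rightarrow> nat) \<Rightarrow> nat \<Rightarrow> nat set \<Rightarrow> real" where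
  "gam d n S = real (dset d S) / real (Msum d n)"

definition Cpar :: "(nat \<Rightarrow> nat) \<Rightarrow> nat \<Rightarrow> nat set \<Rightarrow> real \<Rightarrow> real" where
  "Cpar d n S \<delta> = \<delta> powr (-1/16) / gam d n S * ln (real (Msum d n))"

definition Jpar :: "(nat \<Rightarrow> nat) \<Rightarrow> nat \<Rightarrow> nat set \<Rightarrow> real \<Rightarrow> real" where
  "Jpar d n S \<delta> = min (Cpar d n S \<delta>) (real (d n))"

definition Ssmall :: "(nat \<Rightarrow> nat) \<Rightarrow> nat \<Rightarrow> nat set \<Rightarrow> real \<Rightarrow> nat set" where
  "Ssmall d n S \<delta> = {v \<in> S. real (d v) \<le> Cpar d n S \<delta>}"

end

theory Submission
  imports Defs
begin


definition nbr :: "nat set set \<Rightarrow> nat \<Rightarrow> nat set" where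
  "nbr G v = {u. {v,u} \<in> G}"

definition TT :: "nat set set \<Rightarrow> nat set \<Rightarrow> (nat \<times> nat) set" where
  "TT G X = {(x,y). x \<in> X \<and> {x,y} \<in> G}"

definition TS :: "nat set set \<Rightarrow> nat set \<Rightarrow> (nat \<times> nat) set" where
  "TS G X = {(x,y). y \<in> X \<and> {x,y} \<in> G}"

lemma all_edgesD: "{x,y} \<in> all_edges n \<Longrightarrow> x \<noteq> y \<and> x \<in> {1..n} \<and> y \<in> {1..n}"
  unfolding all_edges_def by (auto simp: doubleton_eq_iff)

lemma all_edges_finite: "finite (all_edges n)"
proof -
  have "all_edges n \<subseteq> Pow {1..n}" unfolding all_edges_def by auto
  then show ?thesis by (meson finite_Pow_iff finite_atLeastAtMost finite_subset)
qed

lemma graphs_deg_finite: "finite (graphs_deg n d)"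
proof -
  have "graphs_deg n d \<subseteq> Pow (all_edges n)" unfolding graphs_deg_def by auto
  then show ?thesis using all_edges_finite by (meson finite_Pow_iff finite_subset)
qed

lemma nbr_sub: assumes "G \<subseteq> all_edges n" shows "nbr G v \<subseteq> {1..n}"
proof
  fix u assume "u \<in> nbr G v"
  then have "{v,u} \<in> all_edges n" using assms unfolding nbr_def by auto
  from all_edgesD[OF this] show "u \<in> {1..n}" by blast
qed

lemma nbr_finite: "G \<subseteq> all_edges n \<Longrightarrow> finite (nbr G v)"
  by (rule finite_subset[OF nbr_sub]) auto

lemma nbr_card: assumes "G \<subseteq> all_edges n" shows "card (nbr G v) = deg G v"
proof -
  have "bij_betw (\<lambda>u. {v,u}) (nbr G v) {e\<in>G. v \<in> e}"
  proof (rule bij_betwI')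
    show "\<And>x y. x \<in> nbr G v \<Longrightarrow> y \<in> nbr G v \<Longrightarrow> ({v, x} = {v, y}) = (x = y)"
      by (auto simp: doubleton_eq_iff)
    show "\<And>x. x \<in> nbr G v \<Longrightarrow> {v, x} \<in> {e \<in> G. v \<in> e}" by (auto simp: nbr_def)
    fix e assume "e \<in> {e \<in> G. v \<in> e}"
    then have "e \<in> all_edges n" "v \<in> e" "e \<in> G" using assms by auto
    then obtain p q where "e = {p,q}" unfolding all_edges_def by auto
    then show "\<exists>x\<in>nbr G v. e = {v, x}"
      using \<open>v \<in> e\<close> \<open>e \<in> G\<close> unfolding nbr_def by (auto simp: insert_commute)
  qed
  then show ?thesis unfolding deg_def by (rule bij_betw_same_card)
qed

lemma deg_out: assumes "G \<subseteq> all_edges n" "v \<notin> {1..n}" shows "deg G v = 0"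
proof -
  have h: "{e\<in>G. v \<in> e} = {}" using assms unfolding all_edges_def by auto
  show ?thesis unfolding deg_def h by simp
qed

lemma TT_Sigma: "TT G X = Sigma X (nbr G)"
  unfolding TT_def nbr_def by auto

lemma TT_card: assumes "G \<subseteq> all_edges n" "finite X"
  shows "card (TT G X) = (\<Sum>x\<in>X. deg G x)"
  unfolding TT_Sigma using assms
  by (simp add: card_SigmaI nbr_finite nbr_card)

lemma TS_card: assumes "G \<subseteq> all_edges n" "finite X"
  shows "card (TS G X) = card (TT G X)"
proof -
  have "TS G X = (\<lambda>(x,y). (y,x)) ` TT G X"
    unfolding TS_def TT_def by (auto simp: insert_commute image_iff)
  moreover have "inj_on (\<lambda>(x,y). (y,x)) (TT G X)" by (auto simp: inj_on_def)
  ultimately show ?thesis by (simp add: card_image)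
qed

lemma TT_le: assumes "G \<subseteq> all_edges n" "finite X" "\<And>x. deg G x \<le> D"
  shows "card (TT G X) \<le> card X * D" "card (TS G X) \<le> card X * D"
proof -
  have "card (TT G X) = (\<Sum>x\<in>X. deg G x)" by (rule TT_card[OF assms(1,2)])
  also have "\<dots> \<le> (\<Sum>x\<in>X. D)" by (rule sum_mono) (use assms in auto)
  finally show "card (TT G X) \<le> card X * D" by simp
  then show "card (TS G X) \<le> card X * D" using TS_card[OF assms(1,2)] by simp
qed

lemma TT_finite: "G \<subseteq> all_edges n \<Longrightarrow> finite X \<Longrightarrow> finite (TT G X)"
  unfolding TT_Sigma by (simp add: nbr_finite)

lemma card_swap:
  assumes "finite G" "R \<subseteq> G" "N \<inter> G = {}" "finite N"
  shows "card {e\<in>(G-R)\<union>N. P e} + card {e\<in>R. P e} = card {e\<in>G. P e} + card {e\<in>N. P e}"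
proof -
  have fR: "finite R" using assms finite_subset by blast
  have 1: "{e\<in>(G-R)\<union>N. P e} = {e\<in>G-R. P e} \<union> {e\<in>N. P e}" by auto
  have 2: "{e\<in>G. P e} = {e\<in>G-R. P e} \<union> {e\<in>R. P e}" using assms by auto
  have "card {e\<in>(G-R)\<union>N. P e} = card {e\<in>G-R. P e} + card {e\<in>N. P e}"
    unfolding 1 by (rule card_Un_disjoint) (use assms in auto)
  moreover have "card {e\<in>G. P e} = card {e\<in>G-R. P e} + card {e\<in>R. P e}"
    unfolding 2 by (rule card_Un_disjoint) (use assms fR in auto)
  ultimately show ?thesis by simp
qed




lemma filt3:
  "card {e\<in>{A,B,C}. P e} = (if P A then 1 else 0) + (if P B then 1 else 0) + (if P C then 1 else 0)"
  if "distinct [A,B,C]"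
proof -
  have "card {e\<in>{A,B,C}. P e} = (\<Sum>e\<in>{e\<in>{A,B,C}. P e}. 1)" by simp
  also have "\<dots> = (\<Sum>e\<in>{A,B,C}. if P e then 1 else 0)" by (rule sum.inter_filter) simp
  also have "\<dots> = (if P A then 1 else 0) + (if P B then 1 else 0) + (if P C then 1 else 0)"
    using that by simp
  finally show ?thesis .
qed

lemma six_count:
  assumes "distinct [a,b,x1,y1,x2,y2]"
  shows "card {e\<in>{{a,b},{x1,y1},{x2,y2}}. v \<in> e} = card {e\<in>{{a,x1},{b,x2},{y1,y2}}. v \<in> e}"
proof -
  have d1: "distinct [{a,b},{x1,y1},{x2,y2}]" using assms by (auto simp: doubleton_eq_iff)
  have d2: "distinct [{a,x1},{b,x2},{y1,y2}]" using assms by (auto simp: doubleton_eq_iff)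
  show ?thesis unfolding filt3[OF d1] filt3[OF d2] using assms by auto
qed


definition sw :: "nat set set \<Rightarrow> nat \<Rightarrow> nat \<Rightarrow> (nat \<times> nat) \<times> (nat \<times> nat) \<Rightarrow> nat set set" where
  "sw G a b t = (case t of ((x1,y1),(x2,y2)) \<Rightarrow>
      (G - {{a,b},{x1,y1},{x2,y2}}) \<union> {{a,x1},{b,x2},{y1,y2}})"

definition O1 :: "nat set set \<Rightarrow> nat set \<Rightarrow> nat set \<Rightarrow> nat \<Rightarrow> (nat \<times> nat) set" where
  "O1 G S V a = {(x,y) \<in> TT G S. x \<notin> V \<and> y \<notin> V \<and> {a,x} \<notin> G}"

definition O2 :: "nat set set \<Rightarrow> nat set \<Rightarrow> nat set \<Rightarrow> nat \<Rightarrow> nat \<times> nat \<Rightarrow> (nat \<times> nat) set" where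
  "O2 G S V b p = {(x,y) \<in> TT G S. x \<notin> V \<and> y \<notin> V \<and> x \<noteq> fst p \<and> x \<noteq> snd p \<and>
       y \<noteq> fst p \<and> y \<noteq> snd p \<and> {b,x} \<notin> G \<and> {snd p, y} \<notin> G}"

definition Fw :: "nat set set \<Rightarrow> nat set \<Rightarrow> nat set \<Rightarrow> nat \<Rightarrow> nat \<Rightarrow> ((nat \<times> nat) \<times> (nat \<times> nat)) set" where
  "Fw G S V a b = Sigma (O1 G S V a) (O2 G S V b)"

lemma sw_facts:
  assumes G: "G \<subseteq> all_edges n" and ab: "{a,b} \<in> G" and aV: "a \<in> V" and bV: "b \<in> V"
    and aS: "a \<in> S" and bS: "b \<in> S"
    and t: "((x1,y1),(x2,y2)) \<in> Fw G S V a b"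
  shows "distinct [a,b,x1,y1,x2,y2]"
    and "sw G a b ((x1,y1),(x2,y2)) \<subseteq> all_edges n"
    and "\<And>v. deg (sw G a b ((x1,y1),(x2,y2))) v = deg G v"
    and "\<And>v. v \<in> V \<Longrightarrow> degS (sw G a b ((x1,y1),(x2,y2))) S v = degS G S v"
    and "{a,x1} \<in> sw G a b ((x1,y1),(x2,y2))" "{b,x2} \<in> sw G a b ((x1,y1),(x2,y2))"
        "{y1,y2} \<in> sw G a b ((x1,y1),(x2,y2))"
    and "G = (sw G a b ((x1,y1),(x2,y2)) - {{a,x1},{b,x2},{y1,y2}}) \<union> {{a,b},{x1,y1},{x2,y2}}"
    and "y1 \<in> {1..n}"
proof -
  have e1: "{x1,y1} \<in> G" and x1S: "x1 \<in> S" and x1V: "x1 \<notin> V" and y1V: "y1 \<notin> V"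
    and nax1: "{a,x1} \<notin> G"
    using t unfolding Fw_def O1_def TT_def by auto
  have e2: "{x2,y2} \<in> G" and x2S: "x2 \<in> S" and x2V: "x2 \<notin> V" and y2V: "y2 \<notin> V"
    and nbx2: "{b,x2} \<notin> G" and ny: "{y1,y2} \<notin> G"
    and dd: "x2 \<noteq> x1" "x2 \<noteq> y1" "y2 \<noteq> x1" "y2 \<noteq> y1"
    using t unfolding Fw_def O2_def TT_def by auto
  have E1: "x1 \<noteq> y1 \<and> x1 \<in> {1..n} \<and> y1 \<in> {1..n}" using all_edgesD G e1 by blast
  have E2: "x2 \<noteq> y2 \<and> x2 \<in> {1..n} \<and> y2 \<in> {1..n}" using all_edgesD G e2 by blast
  have E0: "a \<noteq> b \<and> a \<in> {1..n} \<and> b \<in> {1..n}" using all_edgesD G ab by blast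
  show dist: "distinct [a,b,x1,y1,x2,y2]"
    using E0 E1 E2 dd x1V y1V x2V y2V aV bV by auto
  define R where "R = {{a,b},{x1,y1},{x2,y2}}"
  define N where "N = {{a,x1},{b,x2},{y1,y2}}"
  have H: "sw G a b ((x1,y1),(x2,y2)) = (G - R) \<union> N" unfolding sw_def R_def N_def by simp
  have RG: "R \<subseteq> G" unfolding R_def using ab e1 e2 by auto
  have NG: "N \<inter> G = {}" unfolding N_def using nax1 nbx2 ny by auto
  have fG: "finite G" using G all_edges_finite finite_subset by auto
  have fN: "finite N" unfolding N_def by simp
  show "sw G a b ((x1,y1),(x2,y2)) \<subseteq> all_edges n"
  proof -
    have "N \<subseteq> all_edges n" unfolding N_def all_edges_def using E0 E1 E2 dist by auto
    then show ?thesis unfolding H using G by auto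
  qed
  show "\<And>v. deg (sw G a b ((x1,y1),(x2,y2))) v = deg G v"
  proof -
    fix v
    have "card {e\<in>(G-R)\<union>N. v \<in> e} + card {e\<in>R. v \<in> e} = card {e\<in>G. v \<in> e} + card {e\<in>N. v \<in> e}"
      by (rule card_swap[OF fG RG NG fN])
    moreover have "card {e\<in>R. v \<in> e} = card {e\<in>N. v \<in> e}"
      unfolding R_def N_def by (rule six_count[OF dist])
    ultimately show "deg (sw G a b ((x1,y1),(x2,y2))) v = deg G v" unfolding H deg_def by simp
  qed
  show "\<And>v. v \<in> V \<Longrightarrow> degS (sw G a b ((x1,y1),(x2,y2))) S v = degS G S v"
  proof -
    fix v assume vV: "v \<in> V"
    have "card {e\<in>(G-R)\<union>N. v \<in> e \<and> e \<subseteq> S} + card {e\<in>R. v \<in> e \<and> e \<subseteq> S}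
       = card {e\<in>G. v \<in> e \<and> e \<subseteq> S} + card {e\<in>N. v \<in> e \<and> e \<subseteq> S}"
      by (rule card_swap[OF fG RG NG fN])
    moreover have "card {e\<in>R. v \<in> e \<and> e \<subseteq> S} = card {e\<in>N. v \<in> e \<and> e \<subseteq> S}"
    proof -
      have d1: "distinct [{a,b},{x1,y1},{x2,y2}]" using dist by (auto simp: doubleton_eq_iff)
      have d2: "distinct [{a,x1},{b,x2},{y1,y2}]" using dist by (auto simp: doubleton_eq_iff)
      have vn: "v \<noteq> x1" "v \<noteq> y1" "v \<noteq> x2" "v \<noteq> y2" using vV x1V y1V x2V y2V by auto
      show ?thesis unfolding R_def N_def filt3[OF d1] filt3[OF d2]
        using vn dist aS bS x1S x2S by auto
    qed
    ultimately show "degS (sw G a b ((x1,y1),(x2,y2))) S v = degS G S v" unfolding H degS_def by simp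
  qed
  show "{a,x1} \<in> sw G a b ((x1,y1),(x2,y2))" "{b,x2} \<in> sw G a b ((x1,y1),(x2,y2))"
        "{y1,y2} \<in> sw G a b ((x1,y1),(x2,y2))" unfolding H N_def by auto
  show "G = (sw G a b ((x1,y1),(x2,y2)) - {{a,x1},{b,x2},{y1,y2}}) \<union> {{a,b},{x1,y1},{x2,y2}}"
    unfolding H N_def[symmetric] R_def[symmetric] using RG NG by auto
  show "y1 \<in> {1..n}" using E1 by simp
qed



lemma card_diff_real: "finite B \<Longrightarrow> real (card A) - real (card B) \<le> real (card (A - B))"
  using diff_card_le_card_Diff[of B A] by linarith

lemma deg_graphs: assumes "G \<in> graphs_deg n dd" shows "G \<subseteq> all_edges n"
  "\<And>x. x \<in> {1..n} \<Longrightarrow> deg G x = dd x"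
  using assms unfolding graphs_deg_def by auto

lemma deg_bound: assumes "G \<in> graphs_deg n dd" "\<And>x. x \<in> {1..n} \<Longrightarrow> dd x \<le> D"
  shows "deg G x \<le> D"
proof (cases "x \<in> {1..n}")
  case True then show ?thesis using deg_graphs[OF assms(1)] assms(2) by simp
next
  case False then show ?thesis using deg_out deg_graphs(1)[OF assms(1)] by simp
qed

lemma TT_S_card: assumes "G \<in> graphs_deg n dd" "S \<subseteq> {1..n}"
  shows "card (TT G S) = dset dd S"
proof -
  have fS: "finite S" using assms(2) finite_subset by auto
  have "card (TT G S) = (\<Sum>x\<in>S. deg G x)" by (rule TT_card[OF deg_graphs(1)[OF assms(1)] fS])
  also have "\<dots> = (\<Sum>x\<in>S. dd x)" by (rule sum.cong) (use assms deg_graphs(2) in auto)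
  finally show ?thesis unfolding dset_def .
qed

lemma O1_eq: "O1 G S V a = TT G S - (TT G V \<union> TS G V \<union> TT G (nbr G a))"
  unfolding O1_def TT_def TS_def nbr_def by auto

lemma O2_eq: "O2 G S V b p = TT G S - (TT G (V \<union> {fst p, snd p}) \<union> TS G (V \<union> {fst p, snd p})
    \<union> TT G (nbr G b) \<union> TS G (nbr G (snd p)))"
  unfolding O2_def TT_def TS_def nbr_def by (auto simp: insert_commute)

lemma fw_lower:
  assumes G: "G \<in> graphs_deg n dd" and S: "S \<subseteq> {1..n}" and fV: "finite V" and cV: "card V \<le> k"
    and D: "\<And>x. x \<in> {1..n} \<Longrightarrow> dd x \<le> D"
    and big: "real ((2*k+4)*D + 2*D*D) \<le> real (dset dd S)"
  shows "(real (dset dd S) - real ((2*k+4)*D + 2*D*D))^2 \<le> real (card (Fw G S V a b))"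
proof -
  define E where "E = real ((2*k+4)*D + 2*D*D)"
  define dS where "dS = real (dset dd S)"
  have Gs: "G \<subseteq> all_edges n" using deg_graphs[OF G] by simp
  have dg: "\<And>x. deg G x \<le> D" using deg_bound[OF G D] by blast
  have TTS: "real (card (TT G S)) = dS" unfolding dS_def using TT_S_card[OF G S] by simp
  have fin: "\<And>X. finite X \<Longrightarrow> finite (TT G X)" using TT_finite[OF Gs] by blast
  have finS: "\<And>X. finite X \<Longrightarrow> finite (TS G X)"
  proof -
    fix X :: "nat set" assume "finite X"
    have "TS G X = (\<lambda>(x,y). (y,x)) ` TT G X"
      unfolding TS_def TT_def by (auto simp: insert_commute image_iff)
    then show "finite (TS G X)" using fin[OF \<open>finite X\<close>] by simp
  qed
  have nb: "\<And>v. finite (nbr G v) \<and> card (nbr G v) \<le> D"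
    using nbr_finite[OF Gs] nbr_card[OF Gs] dg by metis
  have bT: "\<And>X. finite X \<Longrightarrow> real (card (TT G X)) \<le> real (card X) * real D"
    using TT_le(1)[OF Gs _ dg] by (metis of_nat_le_iff of_nat_mult)
  have bS: "\<And>X. finite X \<Longrightarrow> real (card (TS G X)) \<le> real (card X) * real D"
    using TT_le(2)[OF Gs _ dg] by (metis of_nat_le_iff of_nat_mult)
  have O1b: "dS - E \<le> real (card (O1 G S V a))"
  proof -
    let ?U = "TT G V \<union> TS G V \<union> TT G (nbr G a)"
    have fU: "finite ?U" using fin finS fV nb by auto
    have "real (card ?U) \<le> real (card (TT G V)) + real (card (TS G V)) + real (card (TT G (nbr G a)))"
      using card_Un_le[of "TT G V \<union> TS G V" "TT G (nbr G a)"] card_Un_le[of "TT G V" "TS G V"]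
      by linarith
    also have "\<dots> \<le> real k * real D + real k * real D + real D * real D"
    proof -
      have "real (card V) \<le> real k" using cV by simp
      then have "real (card V) * real D \<le> real k * real D" by (simp add: mult_right_mono)
      moreover have "real (card (nbr G a)) * real D \<le> real D * real D"
        using nb[of a] by (simp add: mult_right_mono)
      ultimately show ?thesis using bT[OF fV] bS[OF fV] bT[of "nbr G a"] nb[of a] by linarith
    qed
    also have "\<dots> \<le> E" unfolding E_def by (simp add: algebra_simps)
    finally have "real (card ?U) \<le> E" .
    then show ?thesis unfolding O1_eq using card_diff_real[OF fU, of "TT G S"] TTS by linarith
  qed
  have O2b: "dS - E \<le> real (card (O2 G S V b p))" for p
  proof -
    let ?V = "V \<union> {fst p, snd p}"
    let ?U = "TT G ?V \<union> TS G ?V \<union> TT G (nbr G b) \<union> TS G (nbr G (snd p))"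
    have fV': "finite ?V" using fV by simp
    have cV': "real (card ?V) \<le> real k + 2"
    proof -
      have "card ?V \<le> card V + card {fst p, snd p}" by (rule card_Un_le)
      also have "card {fst p, snd p} \<le> 2" by (simp add: card_insert_le_m1)
      finally show ?thesis using cV by linarith
    qed
    have fU: "finite ?U" using fin finS fV' nb by auto
    have "real (card ?U) \<le> real (card (TT G ?V)) + real (card (TS G ?V)) + real (card (TT G (nbr G b)))
        + real (card (TS G (nbr G (snd p))))"
      using card_Un_le[of "TT G ?V \<union> TS G ?V \<union> TT G (nbr G b)" "TS G (nbr G (snd p))"]
        card_Un_le[of "TT G ?V \<union> TS G ?V" "TT G (nbr G b)"] card_Un_le[of "TT G ?V" "TS G ?V"]
      by linarith
    also have "\<dots> \<le> (real k + 2) * real D + (real k + 2) * real D + real D * real D + real D * real D"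
    proof -
      have "real (card ?V) * real D \<le> (real k + 2) * real D" using cV' by (simp add: mult_right_mono)
      moreover have "real (card (nbr G b)) * real D \<le> real D * real D"
        using nb[of b] by (simp add: mult_right_mono)
      moreover have "real (card (nbr G (snd p))) * real D \<le> real D * real D"
        using nb[of "snd p"] by (simp add: mult_right_mono)
      ultimately show ?thesis using bT[OF fV'] bS[OF fV'] bT[of "nbr G b"] bS[of "nbr G (snd p)"] nb
        by (smt (verit))
    qed
    also have "\<dots> = E" unfolding E_def by (simp add: algebra_simps)
    finally have "real (card ?U) \<le> E" .
    then show ?thesis unfolding O2_eq using card_diff_real[OF fU, of "TT G S"] TTS by linarith
  qed
  have fTS: "finite (TT G S)" using fin[of S] S by (meson finite_atLeastAtMost finite_subset)
  have fO1: "finite (O1 G S V a)" unfolding O1_eq using fTS by simp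
  have fO2: "\<And>p. finite (O2 G S V b p)" unfolding O2_eq using fTS by simp
  have "real (card (Fw G S V a b)) = (\<Sum>p\<in>O1 G S V a. real (card (O2 G S V b p)))"
    unfolding Fw_def using card_SigmaI[OF fO1, of "O2 G S V b"] fO2 by simp
  also have "\<dots> \<ge> (\<Sum>p\<in>O1 G S V a. dS - E)" by (rule sum_mono) (rule O2b)
  finally have "real (card (O1 G S V a)) * (dS - E) \<le> real (card (Fw G S V a b))" by simp
  moreover have "(dS - E) * (dS - E) \<le> real (card (O1 G S V a)) * (dS - E)"
    using O1b big unfolding dS_def E_def by (simp add: mult_right_mono)
  ultimately show ?thesis unfolding dS_def[symmetric] E_def[symmetric] by (simp add: power2_eq_square)
qed



definition Rv :: "nat set set \<Rightarrow> nat \<Rightarrow> nat \<Rightarrow> nat \<Rightarrow> ((nat \<times> nat) \<times> (nat \<times> nat)) set" where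
  "Rv H a b n = (\<lambda>(x1,x2,(y1,y2)). ((x1,y1),(x2,y2))) ` (nbr H a \<times> nbr H b \<times> TT H {1..n})"

lemma Rv_card: assumes H: "H \<in> graphs_deg n dd" and a: "a \<in> {1..n}" and b: "b \<in> {1..n}"
  shows "real (card (Rv H a b n)) \<le> real (dd a) * real (dd b) * real (Msum dd n)"
    "finite (Rv H a b n)"
proof -
  have Hs: "H \<subseteq> all_edges n" using deg_graphs[OF H] by simp
  have "card (Rv H a b n) \<le> card (nbr H a \<times> nbr H b \<times> TT H {1..n})"
    unfolding Rv_def by (rule card_image_le) (simp add: nbr_finite[OF Hs] TT_finite[OF Hs])
  also have "\<dots> = dd a * dd b * Msum dd n"
    using nbr_card[OF Hs] deg_graphs(2)[OF H] a b TT_S_card[OF H, of "{1..n}"]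
    by (simp add: card_cartesian_product dset_def Msum_def)
  finally show "real (card (Rv H a b n)) \<le> real (dd a) * real (dd b) * real (Msum dd n)"
    by (metis of_nat_le_iff of_nat_mult)
  show "finite (Rv H a b n)" unfolding Rv_def by (simp add: nbr_finite[OF Hs] TT_finite[OF Hs])
qed

lemma dcount:
  assumes Bs: "Bs \<subseteq> graphs_deg n dd" and aS: "a \<in> S" and bS: "b \<in> S" and aV: "a \<in> V" and bV: "b \<in> V"
    and S: "S \<subseteq> {1..n}"
    and clos: "\<And>G t. G \<in> Bs \<Longrightarrow> {a,b} \<in> G \<Longrightarrow> t \<in> Fw G S V a b \<Longrightarrow> sw G a b t \<in> Bs"
    and low: "\<And>G. G \<in> Bs \<Longrightarrow> {a,b} \<in> G \<Longrightarrow> F \<le> real (card (Fw G S V a b))"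
  shows "real (card {G\<in>Bs. {a,b} \<in> G}) * F \<le> real (card Bs) * (real (dd a) * real (dd b) * real (Msum dd n))"
proof -
  let ?A = "{G\<in>Bs. {a,b} \<in> G}"
  have fB: "finite Bs" using Bs graphs_deg_finite finite_subset by metis
  have fA: "finite ?A" using fB by simp
  have an: "a \<in> {1..n}" "b \<in> {1..n}" using aS bS S by auto
  have fFw: "finite (Fw G S V a b)" if "G \<in> Bs" for G
  proof -
    have Gs: "G \<subseteq> all_edges n" using that Bs deg_graphs by blast
    have fTS: "finite (TT G S)" using TT_finite[OF Gs, of S] S by (meson finite_atLeastAtMost finite_subset)
    have "Fw G S V a b \<subseteq> TT G S \<times> TT G S" unfolding Fw_def O1_def O2_def by auto
    then show ?thesis using fTS by (meson finite_SigmaI finite_subset)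
  qed
  define P where "P = Sigma ?A (\<lambda>G. Fw G S V a b)"
  define Q where "Q = Sigma Bs (\<lambda>H. Rv H a b n)"
  define \<phi> where "\<phi> = (\<lambda>(G,t). (sw G a b t, t))"
  have fQ: "finite Q" unfolding Q_def using fB Rv_card(2) Bs an by blast
  have inj: "inj_on \<phi> P"
  proof (rule inj_onI)
    fix u w assume u: "u \<in> P" and w: "w \<in> P" and eq: "\<phi> u = \<phi> w"
    obtain G t where ut: "u = (G,t)" by (cases u) blast
    obtain G' t' where wt: "w = (G',t')" by (cases w) blast
    have tt: "t = t'" and sweq: "sw G a b t = sw G' a b t" using eq unfolding ut wt \<phi>_def by auto
    obtain x1 y1 x2 y2 where tdef: "t = ((x1,y1),(x2,y2))" by (metis prod.collapse)
    have G: "G \<in> Bs" "{a,b} \<in> G" "t \<in> Fw G S V a b" using u unfolding ut P_def by auto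
    have G': "G' \<in> Bs" "{a,b} \<in> G'" "t \<in> Fw G' S V a b" using w unfolding wt P_def tt by auto
    have Gs: "G \<subseteq> all_edges n" "G' \<subseteq> all_edges n" using G(1) G'(1) Bs deg_graphs by blast+
    have "G = (sw G a b t - {{a,x1},{b,x2},{y1,y2}}) \<union> {{a,b},{x1,y1},{x2,y2}}"
      using sw_facts(8)[OF Gs(1) G(2) aV bV aS bS] G(3) unfolding tdef by blast
    moreover have "G' = (sw G' a b t - {{a,x1},{b,x2},{y1,y2}}) \<union> {{a,b},{x1,y1},{x2,y2}}"
      using sw_facts(8)[OF Gs(2) G'(2) aV bV aS bS] G'(3) unfolding tdef by blast
    ultimately have "G = G'" using sweq by simp
    then show "u = w" using ut wt tt by simp
  qed
  have img: "\<phi> ` P \<subseteq> Q"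
  proof
    fix z assume "z \<in> \<phi> ` P"
    then obtain G t where Gt: "(G,t) \<in> P" and z: "z = (sw G a b t, t)" unfolding \<phi>_def by auto
    obtain x1 y1 x2 y2 where tdef: "t = ((x1,y1),(x2,y2))" by (metis prod.collapse)
    have G: "G \<in> Bs" "{a,b} \<in> G" "t \<in> Fw G S V a b" using Gt unfolding P_def by auto
    have Gs: "G \<subseteq> all_edges n" using G(1) Bs deg_graphs by blast
    note f = sw_facts[OF Gs G(2) aV bV aS bS G(3)[unfolded tdef]]
    have "sw G a b t \<in> Bs" using clos G by blast
    moreover have "t \<in> Rv (sw G a b t) a b n"
    proof -
      have "x1 \<in> nbr (sw G a b t) a" "x2 \<in> nbr (sw G a b t) b" "(y1,y2) \<in> TT (sw G a b t) {1..n}"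
        using f(5,6,7,9) unfolding tdef nbr_def TT_def by auto
      then have "(x1,x2,(y1,y2)) \<in> nbr (sw G a b t) a \<times> nbr (sw G a b t) b \<times> TT (sw G a b t) {1..n}"
        by simp
      then have "(\<lambda>(x1,x2,(y1,y2)). ((x1,y1),(x2,y2))) (x1,x2,(y1,y2)) \<in> Rv (sw G a b t) a b n"
        unfolding Rv_def by (rule imageI)
      then show ?thesis unfolding tdef by simp
    qed
    ultimately show "z \<in> Q" unfolding z Q_def by auto
  qed
  have "card P \<le> card Q" using card_inj_on_le[OF inj img fQ] .
  then have cPQ: "real (card P) \<le> real (card Q)" by simp
  have "real (card P) = (\<Sum>G\<in>?A. real (card (Fw G S V a b)))"
    unfolding P_def using card_SigmaI[OF fA, of "\<lambda>G. Fw G S V a b"] fFw by simp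
  also have "\<dots> \<ge> (\<Sum>G\<in>?A. F)" by (rule sum_mono) (use low in auto)
  finally have 1: "real (card ?A) * F \<le> real (card P)" by simp
  have fR: "\<forall>H\<in>Bs. finite (Rv H a b n)" using Rv_card(2) Bs an by blast
  have "real (card Q) = (\<Sum>H\<in>Bs. real (card (Rv H a b n)))"
    unfolding Q_def card_SigmaI[OF fB fR] by simp
  also have "\<dots> \<le> (\<Sum>H\<in>Bs. real (dd a) * real (dd b) * real (Msum dd n))"
    by (rule sum_mono) (use Rv_card(1) Bs an in blast)
  finally have 2: "real (card Q) \<le> real (card Bs) * (real (dd a) * real (dd b) * real (Msum dd n))" by simp
  show ?thesis using 1 2 cPQ by linarith
qed



lemma sw_gd: assumes G: "G \<in> graphs_deg n dd" and ab: "{a,b} \<in> G" and aV: "a \<in> V" and bV: "b \<in> V"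
    and aS: "a \<in> S" and bS: "b \<in> S" and t: "t \<in> Fw G S V a b"
  shows "sw G a b t \<in> graphs_deg n dd" "\<And>v. v \<in> V \<Longrightarrow> degS (sw G a b t) S v = degS G S v"
proof -
  obtain x1 y1 x2 y2 where tdef: "t = ((x1,y1),(x2,y2))" by (metis prod.collapse)
  have Gs: "G \<subseteq> all_edges n" using deg_graphs[OF G] by simp
  note f = sw_facts[OF Gs ab aV bV aS bS t[unfolded tdef]]
  show "sw G a b t \<in> graphs_deg n dd" unfolding tdef graphs_deg_def
    using f(2,3) G unfolding graphs_deg_def by auto
  show "\<And>v. v \<in> V \<Longrightarrow> degS (sw G a b t) S v = degS G S v" unfolding tdef using f(4) by blast
qed

lemma ratio_alg:
  fixes cA cB F dS da db J M :: real
  assumes "cB > 0" "dS > 0" "dS^2/4 \<le> F" "cA * F \<le> cB * (da * db * M)"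
    "0 \<le> da" "da \<le> J" "0 \<le> db" "db \<le> J" "0 \<le> M" "0 \<le> cA"
  shows "cA / cB \<le> 4 * (J^2 * M / dS^2)"
proof -
  have Fp: "F > 0" using assms(2,3) by (smt (verit) zero_less_power divide_pos_pos)
  have "cA / cB \<le> (da * db * M) / F"
    using assms(1,4) Fp by (simp add: divide_simps mult.commute)
  also have "\<dots> \<le> (J * J * M) / F"
    by (rule divide_right_mono) (use assms Fp in \<open>auto intro!: mult_mono\<close>)
  also have "\<dots> \<le> (J * J * M) / (dS^2/4)"
    by (rule divide_left_mono) (use assms Fp in auto)
  also have "\<dots> = 4 * (J^2 * M / dS^2)" by (simp add: power2_eq_square)
  finally show ?thesis .
qed

lemma per_n:
  assumes Dl: "\<And>x. x \<in> {1..n} \<Longrightarrow> dd x \<le> Dl"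
    and S: "S \<subseteq> {1..n}" and dS: "dset dd S > 0"
    and small: "real ((2*k+4)*Dl + 2*Dl*Dl) \<le> real (dset dd S) / 2"
    and aS: "a \<in> S" and bS: "b \<in> S" and aV: "a \<in> V" and bV: "b \<in> V" and fV: "finite V" and cV: "card V \<le> k"
    and Ja: "real (dd a) \<le> J" and Jb: "real (dd b) \<le> J"
    and Bs: "Bs \<subseteq> graphs_deg n dd"
    and clos: "\<And>G t. G \<in> Bs \<Longrightarrow> {a,b} \<in> G \<Longrightarrow> t \<in> Fw G S V a b \<Longrightarrow> sw G a b t \<in> Bs"
    and cB: "card Bs > 0"
  shows "real (card {G\<in>Bs. {a,b} \<in> G}) / real (card Bs)
     \<le> 4 * (J^2 * real (Msum dd n) / real (dset dd S)^2)"
proof -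
  define F where "F = (real (dset dd S) - real ((2*k+4)*Dl + 2*Dl*Dl))^2"
  have FdS: "real (dset dd S)^2/4 \<le> F"
  proof -
    define x where "x = real (dset dd S) - real ((2*k+4)*Dl + 2*Dl*Dl)"
    define h where "h = real (dset dd S) / 2"
    have hx1: "h \<le> x" unfolding x_def h_def using small by linarith
    have hx2: "0 \<le> h" unfolding h_def by simp
    have "h * h \<le> x * x" using mult_mono[OF hx1 hx1] hx1 hx2 by linarith
    moreover have "real (dset dd S)^2/4 = h * h" unfolding h_def by (simp add: power2_eq_square)
    moreover have "F = x * x" unfolding F_def x_def by (simp add: power2_eq_square)
    ultimately show ?thesis by simp
  qed
  have low: "F \<le> real (card (Fw G S V a b))" if "G \<in> Bs" "{a,b} \<in> G" for G
  proof -
    have G: "G \<in> graphs_deg n dd" using that Bs by blast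
    have big: "real ((2*k+4)*Dl + 2*Dl*Dl) \<le> real (dset dd S)" using small by linarith
    show ?thesis unfolding F_def by (rule fw_lower[OF G S fV cV Dl big])
  qed
  have "real (card {G\<in>Bs. {a,b} \<in> G}) * F \<le> real (card Bs) * (real (dd a) * real (dd b) * real (Msum dd n))"
    by (rule dcount[OF Bs aS bS aV bV S clos low])
  moreover have "real (card Bs) > 0" using cB by simp
  moreover have "real (dset dd S) > 0" using dS by simp
  ultimately show ?thesis
    by (intro ratio_alg[where da="real (dd a)" and db="real (dd b)", OF _ _ FdS]) (use Ja Jb in simp_all)
qed



theorem lemma3p5:
  fixes d :: "nat \<Rightarrow> nat \<Rightarrow> nat" and S :: "nat \<Rightarrow> nat set" and \<delta> :: "nat \<Rightarrow> real"
    and k :: nat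
  assumes deg_pos: "\<And>n i. 1 \<le> i \<Longrightarrow> i \<le> n \<Longrightarrow> 1 \<le> d n i"
    and deg_mono: "\<And>n i j. 1 \<le> i \<Longrightarrow> i \<le> j \<Longrightarrow> j \<le> n \<Longrightarrow> d n i \<le> d n j"
    and even_sum: "\<And>n. even (Msum (d n) n)"
    and S_sub: "\<And>n. S n \<subseteq> {1..n}"
    and dS_pos: "eventually (\<lambda>n. dset (d n) (S n) > 0) at_top"
    and delta_pos: "eventually (\<lambda>n. \<delta> n > 0) at_top"
    and delta_lim: "\<delta> \<longlonglongrightarrow> 0"
    and delta_inv: "(\<lambda>n. 1 / \<delta> n) \<in> O(\<lambda>n. ln (ln (real (Msum (d n) n))))"
    and main_cond: "eventually (\<lambda>n. real (d n n) ^ 2 * (ln (real (Msum (d n) n)) / gam (d n) n (S n)) ^ 12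
                        \<le> \<delta> n * real (dset (d n) (S n))) at_top"
    and gamma_bd: "\<exists>c>0. eventually (\<lambda>n. gam (d n) n (S n) < 1 - c) at_top"
    and k2: "k \<ge> 2"
  shows "\<exists>K. eventually (\<lambda>n.
     \<forall>v :: nat \<Rightarrow> nat.
       (\<forall>j<k. v j \<in> Ssmall (d n) n (S n) (\<delta> n)) \<and> inj_on v {..<k} \<longrightarrow>
       (\<forall>i :: nat \<Rightarrow> int.
          ((\<forall>j<k. i j \<le> int (d n (v j))) \<and>
           card {G \<in> graphs_deg n (d n). \<forall>j<k. int (degS G (S n) (v j)) = i j} > 0) \<longrightarrow>
          ucondprob (graphs_deg n (d n)) (\<lambda>G. {v 0, v 1} \<in> G)
             (\<lambda>G. \<forall>j<k. int (degS G (S n) (v j)) = i j)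
          \<le> K * (Jpar (d n) n (S n) (\<delta> n) ^ 2 * real (Msum (d n) n) / real (dset (d n) (S n)) ^ 2))
       \<and> uprob (graphs_deg n (d n)) (\<lambda>G. {v 0, v 1} \<in> G)
          \<le> K * (Jpar (d n) n (S n) (\<delta> n) ^ 2 * real (Msum (d n) n) / real (dset (d n) (S n)) ^ 2))
     at_top"
proof -
  define K :: real where "K = 4"
  have ev5: "eventually (\<lambda>n. \<delta> n < 1 / (4 * real k + 12)) at_top"
    using order_tendstoD(2)[OF delta_lim, of "1 / (4 * real k + 12)"] by simp
  have ev1: "eventually (\<lambda>n. n \<ge> (3::nat)) at_top" by (rule eventually_ge_at_top)
  have evall: "eventually (\<lambda>n. n \<ge> 3 \<and> dset (d n) (S n) > 0 \<and> \<delta> n > 0 \<and>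
      real (d n n) ^ 2 * (ln (real (Msum (d n) n)) / gam (d n) n (S n)) ^ 12 \<le> \<delta> n * real (dset (d n) (S n))
      \<and> \<delta> n < 1 / (4 * real k + 12)) at_top"
    using eventually_conj[OF ev1 eventually_conj[OF dS_pos eventually_conj[OF delta_pos eventually_conj[OF main_cond ev5]]]] by simp
  show ?thesis
  proof (rule exI[of _ K], rule eventually_mono[OF evall], elim conjE)
    fix n assume n3: "n \<ge> 3" and dSp: "dset (d n) (S n) > 0" and dp: "\<delta> n > 0"
      and mc: "real (d n n) ^ 2 * (ln (real (Msum (d n) n)) / gam (d n) n (S n)) ^ 12 \<le> \<delta> n * real (dset (d n) (S n))"
      and ds: "\<delta> n < 1 / (4 * real k + 12)"
    define dd where "dd = d n"
    define M where "M = real (Msum dd n)"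
    define dS where "dS = real (dset dd (S n))"
    define Dl where "Dl = dd n"
    have Dl: "\<And>x. x \<in> {1..n} \<Longrightarrow> dd x \<le> Dl" unfolding dd_def Dl_def using deg_mono by auto
    have Dl1: "1 \<le> Dl" unfolding Dl_def dd_def using deg_pos[of n n] n3 by simp
    have Mn: "real n \<le> M"
    proof -
      have "(\<Sum>i=1..n. (1::nat)) \<le> (\<Sum>i=1..n. dd i)" by (rule sum_mono) (use deg_pos dd_def in auto)
      then have "n \<le> Msum dd n" unfolding Msum_def by simp
      then show ?thesis unfolding M_def by linarith
    qed
    have dSM: "dS \<le> M"
    proof -
      have "(\<Sum>i\<in>S n. dd i) \<le> (\<Sum>i\<in>{1..n}. dd i)" by (rule sum_mono2) (use S_sub in auto)
      then have "dset dd (S n) \<le> Msum dd n" unfolding Msum_def dset_def by simp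
      then show ?thesis unfolding M_def dS_def by linarith
    qed
    have dS0: "dS > 0" unfolding dS_def using dSp dd_def by simp
    have M3: "3 \<le> M" using Mn n3 by linarith
    have lnM: "1 \<le> ln M"
    proof -
      have "exp 1 \<le> M" using exp_le M3 by linarith
      then have "ln (exp 1) \<le> ln M" using M3 by (subst ln_le_cancel_iff) auto
      then show ?thesis by simp
    qed
    have gam: "gam dd n (S n) = dS / M" unfolding gam_def dS_def M_def by simp
    have g0: "0 < dS / M" using dS0 M3 by simp
    have g1: "dS / M \<le> 1" using dSM M3 by simp
    have L1: "1 \<le> ln M / (dS / M)"
    proof -
      have "ln M \<le> ln M / (dS / M)" proof -
        have "ln M * dS \<le> ln M * M" using lnM dSM by (intro mult_left_mono) auto
        then show ?thesis using g0 g1 lnM dS0 dSM by (simp add: le_divide_eq)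
      qed
      then show ?thesis using lnM by linarith
    qed
    have L12: "1 \<le> (ln M / (dS / M)) ^ 12" using L1 by (rule one_le_power)
    have D2: "real Dl ^ 2 \<le> \<delta> n * dS"
    proof -
      have "real Dl ^ 2 * 1 \<le> real Dl ^ 2 * (ln M / (dS / M)) ^ 12"
        by (rule mult_left_mono[OF L12]) simp
      also have "\<dots> \<le> \<delta> n * dS" using mc unfolding Dl_def dd_def[symmetric] M_def[symmetric]
        gam dS_def[symmetric] by simp
      finally show ?thesis by simp
    qed
    have small: "real ((2*k+4)*Dl + 2*Dl*Dl) \<le> real (dset dd (S n)) / 2"
    proof -
      have DD: "real Dl \<le> real Dl ^ 2" using Dl1 by (simp add: power2_eq_square)
      have "real ((2*k+4)*Dl + 2*Dl*Dl) = (2*real k+4) * real Dl + 2 * real Dl ^ 2"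
        by (simp add: power2_eq_square)
      also have "\<dots> \<le> (2*real k+4) * real Dl ^ 2 + 2 * real Dl ^ 2"
        using DD by (simp add: mult_left_mono)
      also have "\<dots> = (2*real k+6) * real Dl ^ 2" by (simp add: algebra_simps)
      also have "\<dots> \<le> (2*real k+6) * (\<delta> n * dS)" using D2 by (simp add: mult_left_mono)
      also have "\<dots> = ((2*real k+6) * \<delta> n) * dS" by simp
      also have "\<dots> \<le> (1/2) * dS"
      proof (rule mult_right_mono)
        have "(4 * real k + 12) * \<delta> n < 1" using ds by (simp add: field_simps)
        then show "(2*real k+6) * \<delta> n \<le> 1/2" by (simp add: algebra_simps)
      qed (use dS0 in simp)
      finally show ?thesis unfolding dS_def by simp
    qed
    show "\<forall>v :: nat \<Rightarrow> nat.
       (\<forall>j<k. v j \<in> Ssmall (d n) n (S n) (\<delta> n)) \<and> inj_on v {..<k} \<longrightarrow>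
       (\<forall>i :: nat \<Rightarrow> int.
          ((\<forall>j<k. i j \<le> int (d n (v j))) \<and>
           card {G \<in> graphs_deg n (d n). \<forall>j<k. int (degS G (S n) (v j)) = i j} > 0) \<longrightarrow>
          ucondprob (graphs_deg n (d n)) (\<lambda>G. {v 0, v 1} \<in> G)
             (\<lambda>G. \<forall>j<k. int (degS G (S n) (v j)) = i j)
          \<le> K * (Jpar (d n) n (S n) (\<delta> n) ^ 2 * real (Msum (d n) n) / real (dset (d n) (S n)) ^ 2))
       \<and> uprob (graphs_deg n (d n)) (\<lambda>G. {v 0, v 1} \<in> G)
          \<le> K * (Jpar (d n) n (S n) (\<delta> n) ^ 2 * real (Msum (d n) n) / real (dset (d n) (S n)) ^ 2)"
    proof (intro allI impI, elim conjE, rule conjI)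
      fix v :: "nat \<Rightarrow> nat"
      assume vs: "\<forall>j<k. v j \<in> Ssmall (d n) n (S n) (\<delta> n)" and vinj: "inj_on v {..<k}"
      define a where "a = v 0"
      define b where "b = v 1"
      define V where "V = v ` {..<k}"
      define J where "J = Jpar (d n) n (S n) (\<delta> n)"
      have k01: "0 < k" "1 < k" using k2 by auto
      have aSs: "a \<in> Ssmall dd n (S n) (\<delta> n)" "b \<in> Ssmall dd n (S n) (\<delta> n)"
        using vs k01 unfolding a_def b_def dd_def by auto
      have aS: "a \<in> S n" and bS: "b \<in> S n" using aSs unfolding Ssmall_def by auto
      have aV: "a \<in> V" and bV: "b \<in> V" unfolding V_def a_def b_def using k01 by auto
      have fV: "finite V" unfolding V_def by simp
      have cV: "card V \<le> k" unfolding V_def using card_image_le[of "{..<k}" v] by simp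
      have Jx: "real (dd x) \<le> J" if "x \<in> Ssmall dd n (S n) (\<delta> n)" for x
      proof -
        have "x \<in> S n" "real (dd x) \<le> Cpar dd n (S n) (\<delta> n)" using that unfolding Ssmall_def by auto
        moreover have "dd x \<le> dd n" using Dl \<open>x \<in> S n\<close> S_sub unfolding Dl_def by blast
        ultimately show ?thesis unfolding J_def Jpar_def dd_def by simp
      qed
      have Ja: "real (dd a) \<le> J" and Jb: "real (dd b) \<le> J" using Jx aSs by auto
      have Sn: "S n \<subseteq> {1..n}" by (rule S_sub)
      have dSn: "dset dd (S n) > 0" using dSp dd_def by simp
      note pn = per_n[where dd=dd and n=n and Dl=Dl and S="S n" and k=k and a=a and b=b and V=V and J=J, OF Dl Sn dSn small aS bS aV bV fV cV Ja Jb]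
      have rhs0: "0 \<le> K * (J ^ 2 * real (Msum dd n) / real (dset dd (S n)) ^ 2)" unfolding K_def by simp
      show "\<forall>i :: nat \<Rightarrow> int.
          ((\<forall>j<k. i j \<le> int (d n (v j))) \<and>
           card {G \<in> graphs_deg n (d n). \<forall>j<k. int (degS G (S n) (v j)) = i j} > 0) \<longrightarrow>
          ucondprob (graphs_deg n (d n)) (\<lambda>G. {v 0, v 1} \<in> G)
             (\<lambda>G. \<forall>j<k. int (degS G (S n) (v j)) = i j)
          \<le> K * (Jpar (d n) n (S n) (\<delta> n) ^ 2 * real (Msum (d n) n) / real (dset (d n) (S n)) ^ 2)"
      proof (intro allI impI, elim conjE)
        fix i :: "nat \<Rightarrow> int"
        assume cpos: "card {G \<in> graphs_deg n (d n). \<forall>j<k. int (degS G (S n) (v j)) = i j} > 0"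
        define Bs where "Bs = {G \<in> graphs_deg n dd. \<forall>j<k. int (degS G (S n) (v j)) = i j}"
        have Bs: "Bs \<subseteq> graphs_deg n dd" unfolding Bs_def by auto
        have clos: "sw G a b t \<in> Bs" if "G \<in> Bs" "{a,b} \<in> G" "t \<in> Fw G (S n) V a b" for G t
        proof -
          have G: "G \<in> graphs_deg n dd" using that Bs_def by auto
          note sg = sw_gd[OF G that(2) aV bV aS bS that(3)]
          have "\<forall>j<k. int (degS (sw G a b t) (S n) (v j)) = i j"
          proof (intro allI impI)
            fix j assume "j < k"
            then have "v j \<in> V" unfolding V_def by auto
            then show "int (degS (sw G a b t) (S n) (v j)) = i j"
              using sg(2) that(1) \<open>j < k\<close> unfolding Bs_def by auto
          qed
          then show ?thesis using sg(1) unfolding Bs_def by auto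
        qed
        have cB: "card Bs > 0" using cpos unfolding Bs_def dd_def by simp
        have r: "real (card {G\<in>Bs. {a,b} \<in> G}) / real (card Bs)
          \<le> 4 * (J^2 * real (Msum dd n) / real (dset dd (S n))^2)" using pn[OF _ Bs clos cB] by simp
        have e1: "{G\<in>Bs. {a,b} \<in> G} = {G \<in> graphs_deg n (d n). {v 0, v 1} \<in> G \<and> (\<forall>j<k. int (degS G (S n) (v j)) = i j)}"
          unfolding Bs_def a_def b_def dd_def by auto
        have e2: "Bs = {G \<in> graphs_deg n (d n). \<forall>j<k. int (degS G (S n) (v j)) = i j}"
          unfolding Bs_def dd_def by simp
        show "ucondprob (graphs_deg n (d n)) (\<lambda>G. {v 0, v 1} \<in> G)
             (\<lambda>G. \<forall>j<k. int (degS G (S n) (v j)) = i j)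
          \<le> K * (Jpar (d n) n (S n) (\<delta> n) ^ 2 * real (Msum (d n) n) / real (dset (d n) (S n)) ^ 2)"
          using r unfolding ucondprob_def e1[symmetric] e2[symmetric] K_def J_def dd_def by simp
      qed
      show "uprob (graphs_deg n (d n)) (\<lambda>G. {v 0, v 1} \<in> G)
          \<le> K * (Jpar (d n) n (S n) (\<delta> n) ^ 2 * real (Msum (d n) n) / real (dset (d n) (S n)) ^ 2)"
      proof (cases "card (graphs_deg n dd) = 0")
        case True
        then show ?thesis using rhs0 unfolding uprob_def J_def dd_def by simp
      next
        case False
        have clos: "sw G a b t \<in> graphs_deg n dd" if "G \<in> graphs_deg n dd" "{a,b} \<in> G" "t \<in> Fw G (S n) V a b" for G t
          using sw_gd(1)[OF that(1,2) aV bV aS bS that(3)] .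
        have r: "real (card {G\<in>graphs_deg n dd. {a,b} \<in> G}) / real (card (graphs_deg n dd))
          \<le> 4 * (J^2 * real (Msum dd n) / real (dset dd (S n))^2)"
          using pn[OF _ order_refl clos] False by simp
        then show ?thesis unfolding uprob_def K_def J_def dd_def a_def b_def by simp
      qed
    qed
  qed
qed


end
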